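(* Let $d\ge 1$, $\varepsilon>0$, let $Q_k,R_k\in\mathbb{R}^{d\times d}$ be symmetric positive definite matrices and $x_k^*\in\mathbb{R}^d$. Define for $x,y\in\mathbb{R}^d$ $$r_k(x,y)=\exp\Big(-\tfrac{1}{\varepsilon}\Big[\tfrac12 (x-x_k^* )^T Q_k (x-x_k^* )+\tfrac12 (y-x)^T R_k (y-x)\Big]\Big).$$ Let $P_{k+1}^{\ominus}\in\mathbb{R}^{d\times d}$ be symmetric positive definite, $\alpha_{k+1}^{\ominus}\in\mathbb{R}^d$, and $\phi_{k+1}^{\ominus}(y)=\mathcal{N}(y\mid \alpha_{k+1}^{\ominus},(P_{k+1}^{\ominus})^{-1})$. Then the function $$\phi_k^{\ominus}(x)=\int_{\mathbb{R}^d} r_k(x,y)\,\phi_{k+1}^{\ominus}(y)\,dy$$ is, up to a positive multiplicative constant, the Gaussian density $\mathcal{N}(x\mid \alpha_k^{\ominus},(P_k^{\ominus})^{-1})$, where $$P_k^{\ominus}=Q_k/\varepsilon+\big(\varepsilon R_k^{-1}+(P_{k+1}^{\ominus})^{-1}\big)^{-1}=Q_k/\varepsilon+P_{k+1}^{\ominus}-P_{k+1}^{\ominus}\big(R_k/\varepsilon+P_{k+1}^{\ominus}\big)^{-1}P_{k+1}^{\ominus},$$ $$\alpha_k^{\ominus}=(P_k^{\ominus})^{-1}\Big(\tfrac{1}{\varepsilon}Q_k x_k^*+\big(\varepsilon R_k^{-1}+(P_{k+1}^{\ominus})^{-1}\big)^{-1}\alpha_{k+1}^{\ominus}\Big)=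\alpha_{k+1}^{\ominus}+(P_k^{\ominus})^{-1}\tfrac{1}{\varepsilon}Q_k\,(x_k^*-\alpha_{k+1}^{\ominus}).$$
   Context: $\mathcal{N}(x\mid\mu,\Sigma)$ denotes the Gaussian density on $\mathbb{R}^d$ with mean $\mu$ and covariance $\Sigma$. The function $r_k$ is the (unnormalized) pairwise reference measure $\exp(-\ell_k/\varepsilon)$ associated with the LQR transition cost $\ell_k(x_k,x_{k+1})=\frac12(x_k-x_k^* )^TQ_k(x_k-x_k^* )+\frac12(x_{k+1}-x_k)^TR_k(x_{k+1}-x_k)$, and $\phi^{\ominus}_k$ is the backward-propagated Gibbs potential of the Schrödinger system. *)

theory Defs
  imports "HOL-Analysis.Analysis"
begin

definition spd :: "real^'n^'n \<Rightarrow> bool" where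
  "spd A \<longleftrightarrow> transpose A = A \<and> (\<forall>x. x \<noteq> 0 \<longrightarrow> x \<bullet> (A *v x) > 0)"

definition gauss_dens :: "real^'n \<Rightarrow> real^'n^'n \<Rightarrow> real^'n \<Rightarrow> real" where
  "gauss_dens mu S x =
     exp (-(1/2) * ((x - mu) \<bullet> (matrix_inv S *v (x - mu))))
     / sqrt ((2 * pi) ^ CARD('n) * det S)"

definition lqr_ref :: "real \<Rightarrow> real^'n^'n \<Rightarrow> real^'n^'n \<Rightarrow> real^'n \<Rightarrow> real^'n \<Rightarrow> real^'n \<Rightarrow> real" where
  "lqr_ref eps Q R xs x y =
     exp (-(1/eps) * ((1/2) * ((x - xs) \<bullet> (Q *v (x - xs))) + (1/2) * ((y - x) \<bullet> (R *v (y - x)))))"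

end

theory Submission
  imports Defs "HOL-Probability.Probability"
begin

lemma minv_works:
  fixes A :: "real^'n^'n" assumes "invertible A"
  shows "A ** matrix_inv A = mat 1" "matrix_inv A ** A = mat 1"
  using someI_ex[OF assms[unfolded invertible_def]] unfolding matrix_inv_def by auto

lemma minv_unique: fixes A B :: "real^'n^'n" assumes "A ** B = mat 1" shows "matrix_inv A = B"
proof -
  have inv: "invertible A" using assms invertible_right_inverse by blast
  have "matrix_inv A = matrix_inv A ** (A ** B)" using assms by simp
  also have "... = B" by (simp add: matrix_mul_assoc minv_works(2)[OF inv])
  finally show ?thesis .
qed

lemma sym_inner: fixes A :: "real^'n^'n" assumes "transpose A = A"
  shows "x \<bullet> (A *v y) = y \<bullet> (A *v x)"
  by (metis assms dot_lmul_matrix inner_commute vector_transpose_matrix)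

lemma spd_inj: fixes A :: "real^'n^'n" assumes "spd A" shows "inj ((*v) A)"
proof (rule injI)
  fix x y assume "A *v x = A *v y"
  then have "A *v (x - y) = 0" by (simp add: matrix_vector_mult_diff_distrib)
  then have "\<not> (x - y \<noteq> 0)" using assms unfolding spd_def by (metis inner_zero_right less_irrefl)
  then show "x = y" by simp
qed

lemma spd_invertible: fixes A :: "real^'n^'n" assumes "spd A" shows "invertible A"
  using spd_inj[OF assms] matrix_left_invertible_injective invertible_left_inverse by blast

lemma spd_det_nz: fixes A :: "real^'n^'n" assumes "spd A" shows "det A \<noteq> 0"
  using det_nz_iff_inj[of "(*v) A"] spd_inj[OF assms] by (simp add: matrix_of_matrix_vector_mul)

lemma spd_inv: fixes A :: "real^'n^'n" assumes "spd A" shows "spd (matrix_inv A)"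
proof -
  have inv: "invertible A" by (rule spd_invertible[OF assms])
  have sym: "transpose A = A" using assms spd_def by blast
  have "A ** transpose (matrix_inv A) = mat 1"
    by (metis matrix_transpose_mul minv_works(2)[OF inv] sym transpose_mat)
  then have t: "matrix_inv A = transpose (matrix_inv A)" using minv_unique by metis
  have "x \<bullet> (matrix_inv A *v x) > 0" if "x \<noteq> 0" for x
  proof -
    define z where "z = matrix_inv A *v x"
    have Az: "A *v z = x" unfolding z_def by (simp add: matrix_vector_mul_assoc minv_works(1)[OF inv])
    have "z \<noteq> 0" using Az that by auto
    then have "z \<bullet> (A *v z) > 0" using assms spd_def by blast
    then show ?thesis using Az z_def by (simp add: inner_commute)
  qed
  then show ?thesis unfolding spd_def using t by simp
qed

lemma spd_add: fixes A B :: "real^'n^'n" assumes "spd A" "spd B" shows "spd (A + B)"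
  using assms unfolding spd_def
  by (auto simp: transpose_def vec_eq_iff matrix_vector_mult_add_rdistrib inner_add_right add_pos_pos)

lemma spd_scale: fixes A :: "real^'n^'n" assumes "spd A" "c > 0" shows "spd (c *\<^sub>R A)"
  using assms unfolding spd_def
  by (auto simp: transpose_def vec_eq_iff scaleR_matrix_vector_assoc[symmetric])

lemma minv_inv: fixes A :: "real^'n^'n" assumes "invertible A" shows "matrix_inv (matrix_inv A) = A"
  using minv_unique minv_works(2)[OF assms] by blast

lemma spd_det_pos: fixes S :: "real^'n^'n" assumes "spd S" shows "det S > 0"
proof (rule ccontr)
  assume "\<not> det S > 0"
  define f where "f t = det ((1 - t) *\<^sub>R mat 1 + t *\<^sub>R S)" for t :: real
  have f1: "f 1 = det S" by (simp add: f_def)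
  have f0: "f 0 = 1" by (simp add: f_def)
  have cont: "continuous_on {0..1} f"
    unfolding f_def det_def by (intro continuous_intros)
  obtain t where t: "0 \<le> t" "t \<le> 1" "f t = 0"
    using IVT2'[of f 1 0 0] f0 f1 \<open>\<not> det S > 0\<close> cont by auto
  have "spd ((1 - t) *\<^sub>R mat 1 + t *\<^sub>R S)"
  proof -
    have sym: "transpose S = S" using assms spd_def by blast
    have "x \<bullet> (((1 - t) *\<^sub>R mat 1 + t *\<^sub>R S) *v x) > 0" if "x \<noteq> 0" for x
    proof -
      have e: "x \<bullet> (((1 - t) *\<^sub>R mat 1 + t *\<^sub>R S) *v x) = (1 - t) * (x \<bullet> x) + t * (x \<bullet> (S *v x))"
        by (simp add: matrix_vector_mult_add_rdistrib inner_add_right scaleR_matrix_vector_assoc[symmetric])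
      have "x \<bullet> x > 0" using that by simp
      moreover have "x \<bullet> (S *v x) > 0" using assms that spd_def by blast
      ultimately show ?thesis
      proof (cases "t = 0")
        case False
        then have "t * (x \<bullet> (S *v x)) > 0" using t \<open>x \<bullet> (S *v x) > 0\<close> by simp
        moreover have "(1 - t) * (x \<bullet> x) \<ge> 0" using t \<open>x \<bullet> x > 0\<close> by simp
        ultimately show ?thesis using e by linarith
      qed (simp add: e)
    qed
    moreover have "transpose ((1 - t) *\<^sub>R mat 1 + t *\<^sub>R S) = (1 - t) *\<^sub>R mat 1 + t *\<^sub>R S"
      using sym by (auto simp: transpose_def vec_eq_iff mat_def)
    ultimately show ?thesis unfolding spd_def by blast
  qed
  then show False using spd_det_nz t(3) f_def by metis
qed

lemma cont_quad: fixes A :: "real^'n^'n" shows "continuous_on UNIV (\<lambda>y. y \<bullet> (A *v y))"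
  by (intro continuous_intros linear_continuous_on matrix_vector_mul_linear_gen)
   (simp add: matrix_vector_mul_bounded_linear)

lemma spd_lower: fixes A :: "real^'n^'n" assumes "spd A"
  shows "\<exists>l>0. \<forall>y. l * (y \<bullet> y) \<le> y \<bullet> (A *v y)"
proof -
  obtain i :: 'n where True by blast
  have "axis i 1 \<in> sphere (0::real^'n) 1" by (simp add: norm_axis_1)
  then have ne: "sphere (0::real^'n) 1 \<noteq> {}" by blast
  obtain x0 where x0: "x0 \<in> sphere 0 1" and mn: "\<forall>y \<in> sphere 0 1. x0 \<bullet> (A *v x0) \<le> y \<bullet> (A *v y)"
    using continuous_attains_inf[OF compact_sphere ne continuous_on_subset[OF cont_quad subset_UNIV]] by blast
  have "x0 \<noteq> 0" using x0 by auto
  then have pos: "x0 \<bullet> (A *v x0) > 0" using assms unfolding spd_def by blast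
  have "x0 \<bullet> (A *v x0) * (y \<bullet> y) \<le> y \<bullet> (A *v y)" for y
  proof (cases "y = 0")
    case False
    define u where "u = (1 / norm y) *\<^sub>R y"
    have "norm u = 1" using False by (simp add: u_def)
    then have "x0 \<bullet> (A *v x0) \<le> u \<bullet> (A *v u)" using mn by simp
    also have "u \<bullet> (A *v u) = (y \<bullet> (A *v y)) / (norm y)\<^sup>2"
      unfolding u_def by (simp add: matrix_vector_mult_scaleR power2_eq_square)
    also have "(norm y)\<^sup>2 = y \<bullet> y" by (simp add: power2_norm_eq_inner)
    finally show ?thesis using False by (simp add: pos_le_divide_eq)
  qed simp
  then show ?thesis using pos by blast
qed

lemma gauss1_integrable: fixes c :: real assumes "c > 0"
  shows "integrable lborel (\<lambda>t::real. exp (- c * t\<^sup>2))"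
proof -
  define s where "s = sqrt (1 / (2 * c))"
  have s2: "s\<^sup>2 = 1 / (2 * c)" unfolding s_def using assms by simp
  have spos: "s > 0" unfolding s_def using assms by simp
  have "exp (- c * t\<^sup>2) = sqrt (2 * pi * s\<^sup>2) * normal_density 0 s t" for t
    unfolding normal_density_def s2 using assms by simp
  then show ?thesis using integrable_normal_density[OF spos, of 0] by (simp add: integrable_mult_right)
qed

lemma gaussn_integrable: fixes c :: real assumes "c > 0"
  shows "integrable lborel (\<lambda>y::real^'n. exp (- c * (y \<bullet> y)))"
proof -
  have fin1: "(\<integral>\<^sup>+t. ennreal (exp (- c * t\<^sup>2)) \<partial>lborel) < \<infinity>"
    using gauss1_integrable[OF assms] by (simp add: integrable_iff_bounded)
  have eq: "ennreal (exp (- c * (y \<bullet> y))) = (\<Prod>b\<in>Basis. ennreal (exp (- c * (y \<bullet> b)\<^sup>2)))" for y :: "real^'n"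
  proof -
    have "exp (- c * (y \<bullet> y)) = (\<Prod>b\<in>Basis. exp (- c * (y \<bullet> b)\<^sup>2))"
      by (simp add: euclidean_inner[of y y] sum_distrib_left exp_sum[symmetric] power2_eq_square sum_negf)
    then show ?thesis by (simp add: prod_ennreal)
  qed
  have "(\<integral>\<^sup>+y. ennreal (exp (- c * (y \<bullet> y))) \<partial>(lborel :: (real^'n) measure))
      = (\<Prod>b\<in>(Basis :: (real^'n) set). (\<integral>\<^sup>+t. ennreal (exp (- c * t\<^sup>2)) \<partial>lborel))"
    unfolding eq by (rule nn_integral_lborel_prod) auto
  also have "... < \<infinity>" using fin1 by (simp add: ennreal_prod_eq_top less_top power_less_top_ennreal)
  finally have fin: "(\<integral>\<^sup>+y. ennreal (norm (exp (- c * (y \<bullet> y)))) \<partial>(lborel :: (real^'n) measure)) < \<infinity>"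
    by simp
  have "continuous_on UNIV (\<lambda>y::real^'n. exp (- c * (y \<bullet> y)))"
    by (intro continuous_intros)
  then have "(\<lambda>y::real^'n. exp (- c * (y \<bullet> y))) \<in> borel_measurable borel"
    by (rule borel_measurable_continuous_onI)
  then have meas: "(\<lambda>y::real^'n. exp (- c * (y \<bullet> y))) \<in> borel_measurable lborel"
    by simp
  show ?thesis by (subst integrable_iff_bounded) (intro conjI meas fin)
qed

lemma quad_diff: fixes S :: "real^'n^'n" assumes "transpose S = S"
  shows "(a - b) \<bullet> (S *v (a - b)) = a \<bullet> (S *v a) - 2 * (a \<bullet> (S *v b)) + b \<bullet> (S *v b)"
  using sym_inner[OF assms, of b a]
  by (simp add: matrix_vector_mult_diff_distrib inner_diff_left inner_diff_right)

lemma quad_add: fixes S :: "real^'n^'n" assumes "transpose S = S"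
  shows "(a + b) \<bullet> (S *v (a + b)) = a \<bullet> (S *v a) + 2 * (a \<bullet> (S *v b)) + b \<bullet> (S *v b)"
  using sym_inner[OF assms, of b a]
  by (simp add: matrix_vector_right_distrib inner_add_left inner_add_right)

lemma complete_sq:
  fixes Rt P1 A Ai M :: "real^'n^'n" and x y a1 :: "real^'n"
  assumes symR: "transpose Rt = Rt" and symP: "transpose P1 = P1" and symA: "transpose A = A"
    and Adef: "A = Rt + P1" and AAi: "\<And>z. A *v (Ai *v z) = z"
    and Mv: "\<And>v. M *v v = Rt *v v - Rt *v (Ai *v (Rt *v v))"
  shows "(y - x) \<bullet> (Rt *v (y - x)) + (y - a1) \<bullet> (P1 *v (y - a1))
       = (y - (a1 + Ai *v (Rt *v (x - a1)))) \<bullet> (A *v (y - (a1 + Ai *v (Rt *v (x - a1)))))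
         + (x - a1) \<bullet> (M *v (x - a1))"
proof -
  define u where "u = y - a1"
  define w where "w = x - a1"
  define v where "v = Ai *v (Rt *v w)"
  have e1: "y - x = u - w" unfolding u_def w_def by simp
  have e2: "y - (a1 + Ai *v (Rt *v (x - a1))) = u - v" unfolding u_def v_def w_def by simp
  have Av: "A *v v = Rt *v w" unfolding v_def by (rule AAi)
  have uAu: "u \<bullet> (A *v u) = u \<bullet> (Rt *v u) + u \<bullet> (P1 *v u)"
    by (simp add: Adef matrix_vector_mult_add_rdistrib inner_add_right)
  have vAv: "v \<bullet> (A *v v) = w \<bullet> (Rt *v v)" using Av sym_inner[OF symR, of w v] by (simp add: inner_commute)
  have wMw: "w \<bullet> (M *v w) = w \<bullet> (Rt *v w) - w \<bullet> (Rt *v v)"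
    by (simp add: Mv v_def inner_diff_right)
  have X: "(u - w) \<bullet> (Rt *v (u - w)) + u \<bullet> (P1 *v u) = (u - v) \<bullet> (A *v (u - v)) + w \<bullet> (M *v w)"
    using quad_diff[OF symR, of u w] quad_diff[OF symA, of u v] Av uAu vAv wMw
    by (simp add: algebra_simps)
  then have "(y - x) \<bullet> (Rt *v (y - x)) + u \<bullet> (P1 *v u) = (y - (a1 + Ai *v (Rt *v (x - a1)))) \<bullet> (A *v (y - (a1 + Ai *v (Rt *v (x - a1))))) + w \<bullet> (M *v w)"
    by (simp only: e1[symmetric] e2[symmetric])
  then show ?thesis by (simp only: u_def w_def)
qed

lemma shift_sq:
  fixes Qt M Pk :: "real^'n^'n" and x xs a1 ak :: "real^'n"
  assumes symQ: "transpose Qt = Qt" and symM: "transpose M = M"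
    and Pk: "Pk = Qt + M" and Pak: "Pk *v ak = Qt *v xs + M *v a1"
  shows "(x - xs) \<bullet> (Qt *v (x - xs)) + (x - a1) \<bullet> (M *v (x - a1))
       = (x - ak) \<bullet> (Pk *v (x - ak)) + ((ak - xs) \<bullet> (Qt *v (ak - xs)) + (ak - a1) \<bullet> (M *v (ak - a1)))"
proof -
  define h where "h = x - ak"
  have e1: "x - xs = h + (ak - xs)" "x - a1 = h + (ak - a1)" unfolding h_def by simp_all
  have cross: "h \<bullet> (Qt *v (ak - xs)) + h \<bullet> (M *v (ak - a1)) = 0"
  proof -
    have "Qt *v (ak - xs) + M *v (ak - a1) = Pk *v ak - (Qt *v xs + M *v a1)"
      by (simp add: Pk matrix_vector_mult_add_rdistrib matrix_vector_mult_diff_distrib algebra_simps)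
    then have "Qt *v (ak - xs) + M *v (ak - a1) = 0" using Pak by simp
    then show ?thesis by (metis inner_add_right inner_zero_right)
  qed
  have hP: "h \<bullet> (Pk *v h) = h \<bullet> (Qt *v h) + h \<bullet> (M *v h)"
    by (simp add: Pk matrix_vector_mult_add_rdistrib inner_add_right)
  show ?thesis unfolding e1 h_def[symmetric]
    using quad_add[OF symQ, of h "ak - xs"] quad_add[OF symM, of h "ak - a1"] cross hP
    by (simp add: algebra_simps)
qed

lemma transl_integral:
  fixes g :: "real^'n \<Rightarrow> real" and m :: "real^'n"
  assumes [measurable]: "g \<in> borel_measurable borel"
  shows "integrable lborel (\<lambda>y. g (y - m)) \<longleftrightarrow> integrable lborel g"
    and "(\<integral>y. g (y - m) \<partial>lborel) = (\<integral>y. g y \<partial>lborel)"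
proof -
  have d: "distr lborel borel ((+) (- m)) = lborel" by (rule lborel_distr_plus)
  have "integrable lborel g \<longleftrightarrow> integrable (distr lborel borel ((+) (- m))) g" by (simp only: d)
  also have "... \<longleftrightarrow> integrable lborel (\<lambda>y. g (- m + y))"
    by (rule integrable_distr_eq) auto
  finally show "integrable lborel (\<lambda>y. g (y - m)) \<longleftrightarrow> integrable lborel g" by simp
  have "(\<integral>y. g y \<partial>lborel) = (\<integral>y. g y \<partial>(distr lborel borel ((+) (- m))))" by (simp only: d)
  also have "... = (\<integral>y. g (- m + y) \<partial>lborel)"
    by (rule integral_distr) auto
  finally show "(\<integral>y. g (y - m) \<partial>lborel) = (\<integral>y. g y \<partial>lborel)" by simp
qed

lemma gauss_quad:
  fixes A :: "real^'n^'n" assumes "spd A"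
  shows "integrable lborel (\<lambda>y. exp (- (1/2) * (y \<bullet> (A *v y))))"
    and "(\<integral>y. exp (- (1/2) * (y \<bullet> (A *v y))) \<partial>lborel) > 0"
    and "(\<lambda>y. exp (- (1/2) * (y \<bullet> (A *v y)))) \<in> borel_measurable borel"
proof -
  show meas: "(\<lambda>y. exp (- (1/2) * (y \<bullet> (A *v y)))) \<in> borel_measurable borel"
    by (intro borel_measurable_continuous_onI continuous_on_exp continuous_on_mult continuous_on_const cont_quad)
  obtain l where l: "l > 0" "\<And>y. l * (y \<bullet> y) \<le> y \<bullet> (A *v y)" using spd_lower[OF assms] by blast
  have int: "integrable lborel (\<lambda>y::real^'n. exp (- (l/2) * (y \<bullet> y)))"
    using gaussn_integrable[of "l/2"] l by simp
  show integ: "integrable lborel (\<lambda>y. exp (- (1/2) * (y \<bullet> (A *v y))))"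
  proof (rule Bochner_Integration.integrable_bound[OF int])
    show "(\<lambda>y. exp (- (1/2) * (y \<bullet> (A *v y)))) \<in> borel_measurable lborel" using meas by simp
    show "AE y in lborel. norm (exp (- (1/2) * (y \<bullet> (A *v y)))) \<le> norm (exp (- (l/2) * (y \<bullet> y)))"
      using l(2) by (auto intro!: AE_I2)
  qed
  have "(\<integral>y. exp (- (1/2) * (y \<bullet> (A *v y))) \<partial>lborel) \<noteq> 0"
  proof
    assume "(\<integral>y. exp (- (1/2) * (y \<bullet> (A *v y))) \<partial>lborel) = 0"
    then have "AE y in lborel. exp (- (1/2) * (y \<bullet> (A *v y))) = 0"
      using integral_nonneg_eq_0_iff_AE[OF integ] by simp
    then have "AE y in (lborel :: (real^'n) measure). False" by simp
    then show False using AE_iff_measurable[of "UNIV::(real^'n) set" "lborel::(real^'n) measure" "\<lambda>_. False"] by simp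
  qed
  moreover have "(\<integral>y. exp (- (1/2) * (y \<bullet> (A *v y))) \<partial>lborel) \<ge> 0" by (intro integral_nonneg_AE) simp
  ultimately show "(\<integral>y. exp (- (1/2) * (y \<bullet> (A *v y))) \<partial>lborel) > 0" by linarith
qed

theorem mainTheorem1:
  fixes eps :: real
    and Q R P1 :: "real^'n^'n"
    and xs a1 ak :: "real^'n"
    and Pk :: "real^'n^'n"
  assumes "eps > 0"
    and "spd Q" and "spd R" and "spd P1"
  assumes Pk_def: "Pk = (1/eps) *\<^sub>R Q + matrix_inv (eps *\<^sub>R matrix_inv R + matrix_inv P1)"
    and ak_def: "ak = matrix_inv Pk *v ((1/eps) *\<^sub>R (Q *v xs) + matrix_inv (eps *\<^sub>R matrix_inv R + matrix_inv P1) *v a1)"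
  shows "Pk = (1/eps) *\<^sub>R Q + P1 - P1 ** matrix_inv ((1/eps) *\<^sub>R R + P1) ** P1
         \<and> ak = a1 + matrix_inv Pk *v ((1/eps) *\<^sub>R (Q *v (xs - a1)))
         \<and> spd Pk
         \<and> (\<forall>x. integrable lborel (\<lambda>y. lqr_ref eps Q R xs x y * gauss_dens a1 (matrix_inv P1) y))
         \<and> (\<exists>c>0. \<forall>x. (\<integral>y. lqr_ref eps Q R xs x y * gauss_dens a1 (matrix_inv P1) y \<partial>lborel)
                  = c * gauss_dens ak (matrix_inv Pk) x)"
proof -
  have epos: "eps > 0" and sQ: "spd Q" and sR: "spd R" and sP: "spd P1" using assms by auto
  define Rt where "Rt = (1/eps) *\<^sub>R R"
  define Qt where "Qt = (1/eps) *\<^sub>R Q"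
  define A where "A = Rt + P1"
  define Ai where "Ai = matrix_inv A"
  define M where "M = Rt ** Ai ** P1"
  define N where "N = eps *\<^sub>R matrix_inv R + matrix_inv P1"
  have sRt: "spd Rt" unfolding Rt_def using spd_scale[OF sR] epos by simp
  have sQt: "spd Qt" unfolding Qt_def using spd_scale[OF sQ] epos by simp
  have sA: "spd A" unfolding A_def using spd_add[OF sRt sP] .
  have iA: "invertible A" using spd_invertible[OF sA] .
  have iP: "invertible P1" using spd_invertible[OF sP] .
  have iR: "invertible R" using spd_invertible[OF sR] .
  have symR: "transpose Rt = Rt" using sRt spd_def by blast
  have symP: "transpose P1 = P1" using sP spd_def by blast
  have symA: "transpose A = A" using sA spd_def by blast
  have symQ: "transpose Qt = Qt" using sQt spd_def by blast
  have AAi: "\<And>z. A *v (Ai *v z) = z"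
    by (simp add: Ai_def matrix_vector_mul_assoc minv_works(1)[OF iA])
  have AiA: "\<And>z. Ai *v (A *v z) = z"
    by (simp add: Ai_def matrix_vector_mul_assoc minv_works(2)[OF iA])
  have PPi: "\<And>z. P1 *v (matrix_inv P1 *v z) = z"
    by (simp add: matrix_vector_mul_assoc minv_works(1)[OF iP])
  have RiR: "\<And>z. matrix_inv R *v (R *v z) = z"
    by (simp add: matrix_vector_mul_assoc minv_works(2)[OF iR])
  have Mv0: "\<And>v. M *v v = Rt *v (Ai *v (P1 *v v))"
    by (simp add: M_def matrix_vector_mul_assoc matrix_mul_assoc)
  have RtW: "\<And>v. Rt *v (Ai *v (P1 *v v)) = P1 *v v - P1 *v (Ai *v (P1 *v v))"
  proof -
    fix v
    have "A *v (Ai *v (P1 *v v)) = P1 *v v" by (rule AAi)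
    then have "Rt *v (Ai *v (P1 *v v)) + P1 *v (Ai *v (P1 *v v)) = P1 *v v"
      by (simp add: A_def matrix_vector_mult_add_rdistrib)
    then show "Rt *v (Ai *v (P1 *v v)) = P1 *v v - P1 *v (Ai *v (P1 *v v))"
      by (simp add: algebra_simps)
  qed
  have Mv1: "\<And>v. M *v v = P1 *v v - P1 *v (Ai *v (P1 *v v))" using Mv0 RtW by simp
  have Mv2: "\<And>v. M *v v = Rt *v v - Rt *v (Ai *v (Rt *v v))"
  proof -
    fix v
    have "P1 *v v = A *v v - Rt *v v" by (simp add: A_def matrix_vector_mult_add_rdistrib)
    then have "Ai *v (P1 *v v) = v - Ai *v (Rt *v v)"
      by (simp add: matrix_vector_mult_diff_distrib AiA)
    then show "M *v v = Rt *v v - Rt *v (Ai *v (Rt *v v))"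
      using Mv0 by (simp add: matrix_vector_mult_diff_distrib)
  qed
  have NM: "N ** M = mat 1"
  proof -
    have "(N ** M) *v v = v" for v
    proof -
      define w where "w = Ai *v (P1 *v v)"
      have Mw: "M *v v = Rt *v w" using Mv0 w_def by simp
      have a: "(eps *\<^sub>R matrix_inv R) *v (Rt *v w) = w"
        using epos by (simp add: Rt_def scaleR_matrix_vector_assoc[symmetric] matrix_scaleR_vector_ac[symmetric] matrix_vector_mult_scaleR RiR)
      have b: "matrix_inv P1 *v (Rt *v w) = v - w"
      proof -
        have "Rt *v w = P1 *v (v - w)" using RtW[of v] by (simp add: w_def matrix_vector_mult_diff_distrib)
        then show ?thesis by (simp add: matrix_vector_mul_assoc minv_works(2)[OF iP])
      qed
      show ?thesis
        by (simp add: matrix_vector_mul_assoc[symmetric] Mw N_def matrix_vector_mult_add_rdistrib a b)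
    qed
    then show ?thesis by (simp add: matrix_eq)
  qed
  have invN: "matrix_inv N = M" by (rule minv_unique[OF NM])
  have sN: "spd N" unfolding N_def
    by (intro spd_add spd_scale spd_inv sR sP epos)
  have sM: "spd M" using spd_inv[OF sN] invN by simp
  have symM: "transpose M = M" using sM spd_def by blast
  have Pk': "Pk = Qt + M" using Pk_def invN by (simp add: Qt_def N_def)
  have sPk: "spd Pk" unfolding Pk' by (rule spd_add[OF sQt sM])
  have iPk: "invertible Pk" using spd_invertible[OF sPk] .
  have PkPki: "\<And>z. Pk *v (matrix_inv Pk *v z) = z"
    by (simp add: matrix_vector_mul_assoc minv_works(1)[OF iPk])
  have conj1: "Pk = (1/eps) *\<^sub>R Q + P1 - P1 ** matrix_inv ((1/eps) *\<^sub>R R + P1) ** P1"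
  proof -
    have "M = P1 - P1 ** Ai ** P1"
      by (simp add: matrix_eq Mv1 matrix_vector_mult_diff_rdistrib matrix_vector_mul_assoc[symmetric])
    then show ?thesis unfolding Pk' by (simp add: Qt_def Ai_def A_def Rt_def algebra_simps)
  qed
  have Pak: "Pk *v ak = Qt *v xs + M *v a1"
    unfolding ak_def PkPki using invN by (simp add: N_def Qt_def scaleR_matrix_vector_assoc)
  have conj2: "ak = a1 + matrix_inv Pk *v ((1/eps) *\<^sub>R (Q *v (xs - a1)))"
  proof -
    have z: "(1/eps) *\<^sub>R (Q *v (xs - a1)) = Qt *v xs - Qt *v a1"
      unfolding Qt_def by (metis scaleR_matrix_vector_assoc matrix_vector_mult_diff_distrib scaleR_diff_right)
    have "Pk *v (a1 + matrix_inv Pk *v ((1/eps) *\<^sub>R (Q *v (xs - a1)))) = Pk *v a1 + (Qt *v xs - Qt *v a1)"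
      by (simp only: matrix_vector_right_distrib PkPki z)
    also have "... = Qt *v xs + M *v a1"
      by (simp add: Pk' matrix_vector_mult_add_rdistrib)
    finally have "Pk *v (a1 + matrix_inv Pk *v ((1/eps) *\<^sub>R (Q *v (xs - a1)))) = Pk *v ak"
      using Pak by simp
    then show ?thesis using spd_inj[OF sPk] by (auto dest: injD)
  qed
  have gP1: "matrix_inv (matrix_inv P1) = P1" by (rule minv_inv[OF iP])
  have gPk: "matrix_inv (matrix_inv Pk) = Pk" by (rule minv_inv[OF iPk])
  define D1 where "D1 = (2 * pi) ^ CARD('n) * det (matrix_inv P1)"
  define Dk where "Dk = (2 * pi) ^ CARD('n) * det (matrix_inv Pk)"
  have D1pos: "D1 > 0" unfolding D1_def using spd_det_pos[OF spd_inv[OF sP]] by simp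
  have Dkpos: "Dk > 0" unfolding Dk_def using spd_det_pos[OF spd_inv[OF sPk]] by simp
  define m where "m x = a1 + Ai *v (Rt *v (x - a1))" for x
  define C where "C = (ak - xs) \<bullet> (Qt *v (ak - xs)) + (ak - a1) \<bullet> (M *v (ak - a1))"
  define g where "g y = exp (- (1/2) * (y \<bullet> (A *v y)))" for y
  define K where "K x = exp (- (1/2) * ((x - ak) \<bullet> (Pk *v (x - ak)) + C)) / sqrt D1" for x
  have key: "lqr_ref eps Q R xs x y * gauss_dens a1 (matrix_inv P1) y = g (y - m x) * K x" for x y
  proof -
    have q1: "(1/eps) * ((1/2) * ((x - xs) \<bullet> (Q *v (x - xs))) + (1/2) * ((y - x) \<bullet> (R *v (y - x))))
        = (1/2) * ((x - xs) \<bullet> (Qt *v (x - xs))) + (1/2) * ((y - x) \<bullet> (Rt *v (y - x)))"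
      by (simp add: Qt_def Rt_def scaleR_matrix_vector_assoc[symmetric] algebra_simps)
    have cs: "(y - x) \<bullet> (Rt *v (y - x)) + (y - a1) \<bullet> (P1 *v (y - a1))
       = (y - m x) \<bullet> (A *v (y - m x)) + (x - a1) \<bullet> (M *v (x - a1))"
      unfolding m_def by (rule complete_sq[OF symR symP symA A_def AAi Mv2])
    have ss: "(x - xs) \<bullet> (Qt *v (x - xs)) + (x - a1) \<bullet> (M *v (x - a1))
       = (x - ak) \<bullet> (Pk *v (x - ak)) + C"
      unfolding C_def by (rule shift_sq[OF symQ symM Pk' Pak])
    have ex: "- (1/eps) * ((1/2) * ((x - xs) \<bullet> (Q *v (x - xs))) + (1/2) * ((y - x) \<bullet> (R *v (y - x))))
              + (- (1/2) * ((y - a1) \<bullet> (P1 *v (y - a1))))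
            = - (1/2) * ((y - m x) \<bullet> (A *v (y - m x))) + (- (1/2) * ((x - ak) \<bullet> (Pk *v (x - ak)) + C))"
      using q1 cs ss by (simp add: algebra_simps)
    have "lqr_ref eps Q R xs x y * gauss_dens a1 (matrix_inv P1) y
        = exp (- (1/eps) * ((1/2) * ((x - xs) \<bullet> (Q *v (x - xs))) + (1/2) * ((y - x) \<bullet> (R *v (y - x))))
              + (- (1/2) * ((y - a1) \<bullet> (P1 *v (y - a1))))) / sqrt D1"
      unfolding lqr_ref_def gauss_dens_def gP1 D1_def[symmetric] by (simp only: exp_add times_divide_eq_right)
    also have "... = exp (- (1/2) * ((y - m x) \<bullet> (A *v (y - m x))) + (- (1/2) * ((x - ak) \<bullet> (Pk *v (x - ak)) + C))) / sqrt D1"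
      by (simp only: ex)
    also have "... = g (y - m x) * K x"
      unfolding g_def K_def by (simp only: exp_add times_divide_eq_right)
    finally show ?thesis .
  qed
  have gm: "g \<in> borel_measurable borel" unfolding g_def using gauss_quad(3)[OF sA] .
  have gint: "integrable lborel g" unfolding g_def using gauss_quad(1)[OF sA] .
  define J where "J = (\<integral>y. g y \<partial>lborel)"
  have Jpos: "J > 0" unfolding J_def g_def using gauss_quad(2)[OF sA] .
  have conj4: "\<forall>x. integrable lborel (\<lambda>y. lqr_ref eps Q R xs x y * gauss_dens a1 (matrix_inv P1) y)"
  proof
    fix x
    have "integrable lborel (\<lambda>y. g (y - m x))" using transl_integral(1)[OF gm] gint by blast
    then show "integrable lborel (\<lambda>y. lqr_ref eps Q R xs x y * gauss_dens a1 (matrix_inv P1) y)"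
      unfolding key by (rule integrable_mult_left)
  qed
  define c where "c = J * exp (- (1/2) * C) * sqrt Dk / sqrt D1"
  have cpos: "c > 0" unfolding c_def using Jpos D1pos Dkpos by simp
  have conj5: "\<forall>x. (\<integral>y. lqr_ref eps Q R xs x y * gauss_dens a1 (matrix_inv P1) y \<partial>lborel)
                  = c * gauss_dens ak (matrix_inv Pk) x"
  proof
    fix x
    have "(\<integral>y. lqr_ref eps Q R xs x y * gauss_dens a1 (matrix_inv P1) y \<partial>lborel) = J * K x"
      unfolding key integral_mult_left_zero J_def using transl_integral(2)[OF gm] by simp
    also have "... = c * gauss_dens ak (matrix_inv Pk) x"
    proof -
      have "exp (- (1/2) * ((x - ak) \<bullet> (Pk *v (x - ak)) + C))
          = exp (- (1/2) * ((x - ak) \<bullet> (Pk *v (x - ak)))) * exp (- (1/2) * C)"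
        by (simp add: exp_add[symmetric] algebra_simps)
      then show ?thesis
        unfolding K_def c_def gauss_dens_def gPk Dk_def[symmetric]
        using D1pos Dkpos by (simp add: field_simps)
    qed
    finally show "(\<integral>y. lqr_ref eps Q R xs x y * gauss_dens a1 (matrix_inv P1) y \<partial>lborel)
                  = c * gauss_dens ak (matrix_inv Pk) x" .
  qed
  show ?thesis using conj1 conj2 sPk conj4 conj5 cpos by blast
qed

end
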